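(* Let $C$ be a program, let $F=\{f_1\preceq f_2\preceq\cdots\}$ be an $\omega$-chain in $\mathbb{T}$, let $f,g\in\mathbb{T}$, and let $u\in\mathbb{T}$ be a constant runtime. Then: (1) ($\omega$-continuity) $\mathsf{ert}[\![C]\!](\sup F)=\sup\{\mathsf{ert}[\![C]\!](f')\mid f'\in F\}$; (2) (monotonicity) $f\preceq g$ implies $\mathsf{ert}[\![C]\!](f)\preceq\mathsf{ert}[\![C]\!](g)$; (3) (sub-additivity) $\mathsf{ert}[\![C]\!](f+g)\preceq\mathsf{ert}[\![C]\!](f)+\mathsf{ert}[\![C]\!](g)$; (4) (constant propagation) $\mathsf{ert}[\![C]\!](u+f)\preceq u+\mathsf{ert}[\![C]\!](f)$.
   Context: States and programs. Fix a finite set $\mathrm{Vars}$ of variables; values are $\mathbb{N}$, locations are $\mathbb{N}_{>0}$. A stack is $s\colon \mathrm{Vars}\to\mathbb{N}$; a heap is a partial map $h$ from a finite set $\mathrm{dom}(h)\subseteq\mathbb{N}_{>0}$ to $\mathbb{N}$. $h_1\perp h_2$ means disjoint domains; then $h_1\star h_2$ is their union; $h_\emptyset$ is the empty heap. $\mathsf{States}$ is the set of pairs $(s,h)$. $s(e)$ is the value of a (heap-independent) arithmetic expression $e$ under $s$, $s\models\varphi$ means the Boolean expression $\varphi$ holds under $s$, $s[x\mapsto v]$ is the updated stack. Programs are generated by $C ::= \mathtt{tick}(e) \mid x:=e \mid x:=\mathtt{alloc}(e) \mid \langle e\rangle:=e' \mid x:=\langle e\rangle \mid \mathtt{free}(e)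 \mid \{C\}[p]\{C\} \mid \mathtt{if}(\varphi)\{C\}\mathtt{else}\{C\} \mid C;C \mid \mathtt{while}(\varphi)\{C\}$, where $p$ is an expression with $s(p)\in[0,1]\cap\mathbb{Q}$ for all $s$. Runtimes. $\mathbb{T}$ is the set of functions $\mathsf{States}\to[0,\infty]$, ordered pointwise by $\preceq$ (suprema pointwise); arithmetic is pointwise with $0\cdot\infty=0$. $[\varphi]$ is the $0/1$-valued Iverson bracket. Truncated subtraction: $a\dot- b=\max(a-b,0)$, $\infty\dot- b=\infty$ for finite $b$, $a\dot-\infty=0$. $(f\oplus g)(s,h)=\min\{f(s,h_1)+g(s,h_2)\mid h=h_1\star h_2\}$; $(f \mathbin{-\!\!\ominus} g)(s,h)=\sup\{g(s,h\star h')\dot- f(s,h')\mid h'\perp h\}$; $(\inf y\colon f)(s,h)=\inf_{v\in\mathbb{N}} f(s[y\mapsto v],h)$, $(\sup y\colon f)(s,h)=\sup_{v\in\mathbb{N}}f(s[y\mapsto v],h)$; $f[x/e](s,h)=f(s[x\mapsto s(e)],h)$. $\mathsf{tm}(e)(s,h)=s(e)$ if $h=h_\emptyset$, else $\infty$; $[e\mapsto e'](s,h)=0$ if $\mathrm{dom}(h)=\{s(e)\}$ and $h(s(e))=s(e')$, else $\infty$; $[e\mapsto -](s,h)=0$ if $\mathrm{dom}(h)=\{s(e)\}$, else $\infty$; $\bigoplus_{i=1}^{e} f_i$ is the separating sum over $i=1,\dots,s(e)$ (empty one: $[\mathsf{emp}]$, which is $0$ if $h=h_\emptyset$, else $\infty$).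 Expected runtime transformer $\mathsf{ert}[\![C]\!]\colon\mathbb{T}\to\mathbb{T}$ (with $v$ fresh): $\mathsf{ert}[\![\mathtt{tick}(e)]\!](f)=\mathsf{tm}(e)\oplus f$; $\mathsf{ert}[\![x:=e]\!](f)=f[x/e]$; $\mathsf{ert}[\![x:=\mathtt{alloc}(e)]\!](f)=\sup v\colon (\bigoplus_{i=1}^{e}[v+i-1\mapsto 0])\mathbin{-\!\!\ominus} f[x/v]$; $\mathsf{ert}[\![\langle e\rangle:=e']\!](f)=[e\mapsto-]\oplus([e\mapsto e']\mathbin{-\!\!\ominus} f)$; $\mathsf{ert}[\![x:=\langle e\rangle]\!](f)=\inf v\colon [e\mapsto v]\oplus([e\mapsto v]\mathbin{-\!\!\ominus} f[x/v])$; $\mathsf{ert}[\![\mathtt{free}(e)]\!](f)=[e\mapsto-]\oplus f$; $\mathsf{ert}[\![C_1;C_2]\!](f)=\mathsf{ert}[\![C_1]\!](\mathsf{ert}[\![C_2]\!](f))$; conditional: $[\varphi]\cdot\mathsf{ert}[\![C_1]\!](f)+[\neg\varphi]\cdot\mathsf{ert}[\![C_2]\!](f)$; probabilistic choice: $p\cdot\mathsf{ert}[\![C_1]\!](f)+(1-p)\cdot\mathsf{ert}[\![C_2]\!](f)$; $\mathsf{ert}[\![\mathtt{while}(\varphi)\{C\}]\!](f)=\mathrm{lfp}\, g.\ [\neg\varphi]\cdot f+[\varphi]\cdot\mathsf{ert}[\![C]\!](g)$ (least fixed point in $(\mathbb{T},\preceq)$). *)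

theory Defs
  imports Main "HOL-Library.Extended_Nonnegative_Real"
begin

type_synonym 'v stack = "'v \<Rightarrow> nat"

typedef heap = "{h :: nat \<rightharpoonup> nat. finite (dom h) \<and> 0 \<notin> dom h}"
  morphisms hmap Abs_heap
  by (rule exI[of _ Map.empty]) auto

definition hemp :: heap where "hemp = Abs_heap Map.empty"

definition hdisj :: "heap \<Rightarrow> heap \<Rightarrow> bool" where
  "hdisj h1 h2 \<longleftrightarrow> dom (hmap h1) \<inter> dom (hmap h2) = {}"

definition hunion :: "heap \<Rightarrow> heap \<Rightarrow> heap" where
  "hunion h1 h2 = Abs_heap (hmap h1 ++ hmap h2)"

type_synonym 'v rt = "'v stack \<times> heap \<Rightarrow> ennreal"

definition tsub :: "ennreal \<Rightarrow> ennreal \<Rightarrow> ennreal" where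
  "tsub a b = (if b = top then 0 else if a = top then top else a - b)"

definition iverson :: "('v stack \<Rightarrow> bool) \<Rightarrow> 'v rt" where
  "iverson \<phi> = (\<lambda>(s, h). if \<phi> s then 1 else 0)"

definition sep_conj :: "'v rt \<Rightarrow> 'v rt \<Rightarrow> 'v rt" where
  "sep_conj f g = (\<lambda>(s, h). INF p \<in> {(h1, h2). hdisj h1 h2 \<and> h = hunion h1 h2}.
                              f (s, fst p) + g (s, snd p))"

definition sep_wand :: "'v rt \<Rightarrow> 'v rt \<Rightarrow> 'v rt" where
  "sep_wand f g = (\<lambda>(s, h). SUP h' \<in> {h'. hdisj h' h}. tsub (g (s, hunion h h')) (f (s, h')))"

definition subst :: "'v rt \<Rightarrow> 'v \<Rightarrow> ('v stack \<Rightarrow> nat) \<Rightarrow> 'v rt" where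
  "subst f x e = (\<lambda>(s, h). f (s(x := e s), h))"

definition tm :: "('v stack \<Rightarrow> nat) \<Rightarrow> 'v rt" where
  "tm e = (\<lambda>(s, h). if h = hemp then of_nat (e s) else top)"

definition pts :: "('v stack \<Rightarrow> nat) \<Rightarrow> ('v stack \<Rightarrow> nat) \<Rightarrow> 'v rt" where
  "pts e e' = (\<lambda>(s, h). if dom (hmap h) = {e s} \<and> hmap h (e s) = Some (e' s) then 0 else top)"

definition pts_any :: "('v stack \<Rightarrow> nat) \<Rightarrow> 'v rt" where
  "pts_any e = (\<lambda>(s, h). if dom (hmap h) = {e s} then 0 else top)"

definition emp_rt :: "'v rt" where
  "emp_rt = (\<lambda>(s, h). if h = hemp then 0 else top)"

primrec bigsep :: "nat \<Rightarrow> (nat \<Rightarrow> 'v rt) \<Rightarrow> 'v rt" where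
  "bigsep 0 F = emp_rt"
| "bigsep (Suc n) F = sep_conj (bigsep n F) (F (Suc n))"

definition bigsep_e :: "('v stack \<Rightarrow> nat) \<Rightarrow> (nat \<Rightarrow> 'v rt) \<Rightarrow> 'v rt" where
  "bigsep_e e F = (\<lambda>(s, h). bigsep (e s) F (s, h))"

datatype 'v prog =
    Tick "'v stack \<Rightarrow> nat"
  | Assign 'v "'v stack \<Rightarrow> nat"
  | Alloc 'v "'v stack \<Rightarrow> nat"
  | Store "'v stack \<Rightarrow> nat" "'v stack \<Rightarrow> nat"
  | Load 'v "'v stack \<Rightarrow> nat"
  | Free "'v stack \<Rightarrow> nat"
  | PChoice "'v prog" "'v stack \<Rightarrow> real" "'v prog"
  | If "'v stack \<Rightarrow> bool" "'v prog" "'v prog"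
  | Seq "'v prog" "'v prog"
  | While "'v stack \<Rightarrow> bool" "'v prog"

primrec wf_prog :: "'v prog \<Rightarrow> bool" where
  "wf_prog (Tick e) = True"
| "wf_prog (Assign x e) = True"
| "wf_prog (Alloc x e) = True"
| "wf_prog (Store e e') = True"
| "wf_prog (Load x e) = True"
| "wf_prog (Free e) = True"
| "wf_prog (PChoice C1 p C2) = ((\<forall>s. p s \<in> {0..1} \<and> p s \<in> \<rat>) \<and> wf_prog C1 \<and> wf_prog C2)"
| "wf_prog (If \<phi> C1 C2) = (wf_prog C1 \<and> wf_prog C2)"
| "wf_prog (Seq C1 C2) = (wf_prog C1 \<and> wf_prog C2)"
| "wf_prog (While \<phi> C) = wf_prog C"

text \<open>The fresh variable v of the paper is rendered as a bound value \<open>v :: nat\<close>.\<close>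
primrec ert :: "'v prog \<Rightarrow> 'v rt \<Rightarrow> 'v rt" where
  "ert (Tick e) f = sep_conj (tm e) f"
| "ert (Assign x e) f = subst f x e"
| "ert (Alloc x e) f = (\<lambda>\<sigma>. SUP v::nat.
      sep_wand (bigsep_e e (\<lambda>i. pts (\<lambda>_. v + i - 1) (\<lambda>_. 0))) (subst f x (\<lambda>_. v)) \<sigma>)"
| "ert (Store e e') f = sep_conj (pts_any e) (sep_wand (pts e e') f)"
| "ert (Load x e) f = (\<lambda>\<sigma>. INF v::nat.
      sep_conj (pts e (\<lambda>_. v)) (sep_wand (pts e (\<lambda>_. v)) (subst f x (\<lambda>_. v))) \<sigma>)"
| "ert (Free e) f = sep_conj (pts_any e) f"
| "ert (PChoice C1 p C2) f =
     (\<lambda>\<sigma>. ennreal (p (fst \<sigma>)) * ert C1 f \<sigma> + ennreal (1 - p (fst \<sigma>)) * ert C2 f \<sigma>)"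
| "ert (If \<phi> C1 C2) f =
     (\<lambda>\<sigma>. iverson \<phi> \<sigma> * ert C1 f \<sigma> + iverson (\<lambda>s. \<not> \<phi> s) \<sigma> * ert C2 f \<sigma>)"
| "ert (Seq C1 C2) f = ert C1 (ert C2 f)"
| "ert (While \<phi> C) f =
     lfp (\<lambda>g \<sigma>. iverson (\<lambda>s. \<not> \<phi> s) \<sigma> * f \<sigma> + iverson \<phi> \<sigma> * ert C g \<sigma>)"

end

theory Submission
  imports Defs
begin


lemma hmap_Abs: "finite (dom m) \<Longrightarrow> 0 \<notin> dom m \<Longrightarrow> hmap (Abs_heap m) = m"
  by (simp add: Abs_heap_inverse)

lemma hmap_prop: "finite (dom (hmap h)) \<and> 0 \<notin> dom (hmap h)"
  using hmap by auto

lemma hmap_hemp[simp]: "hmap hemp = Map.empty"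
  unfolding hemp_def by (simp add: hmap_Abs)

lemma hmap_hunion: "hmap (hunion h1 h2) = hmap h1 ++ hmap h2"
  unfolding hunion_def using hmap_prop[of h1] hmap_prop[of h2] by (simp add: hmap_Abs)

lemma heap_eqI: "hmap h1 = hmap h2 \<Longrightarrow> h1 = h2"
  by (simp add: hmap_inject)

definition hdel :: "heap \<Rightarrow> nat \<Rightarrow> heap" where
  "hdel h a = Abs_heap ((hmap h)(a := None))"

lemma hmap_hdel: "hmap (hdel h a) = (hmap h)(a := None)"
  unfolding hdel_def using hmap_prop[of h] by (simp add: hmap_Abs)

lemma tick_char: "sep_conj (tm e) f (s, h) = of_nat (e s) + f (s, h)"
proof -
  have mem: "(hemp, h) \<in> {(h1, h2). hdisj h1 h2 \<and> h = hunion h1 h2}"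
    by (auto simp: hdisj_def intro!: heap_eqI simp: hmap_hunion)
  show ?thesis unfolding sep_conj_def
  proof (simp, rule antisym)
    show "(INF p\<in>{(h1, h2). hdisj h1 h2 \<and> h = hunion h1 h2}. tm e (s, fst p) + f (s, snd p))
        \<le> of_nat (e s) + f (s, h)"
      by (rule INF_lower2[OF mem]) (simp add: tm_def)
    show "of_nat (e s) + f (s, h) \<le> (INF p\<in>{(h1, h2). hdisj h1 h2 \<and> h = hunion h1 h2}. tm e (s, fst p) + f (s, snd p))"
    proof (rule INF_greatest, clarsimp)
      fix h1 h2 assume d: "hdisj h1 h2" and hh: "h = hunion h1 h2"
      show "of_nat (e s) + f (s, hunion h1 h2) \<le> tm e (s, h1) + f (s, h2)"
      proof (cases "h1 = hemp")
        case True
        then have "hunion h1 h2 = h2" by (auto intro!: heap_eqI simp: hmap_hunion)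
        then show ?thesis using True by (simp add: tm_def)
      qed (simp add: tm_def)
    qed
  qed
qed

lemma cell_split:
  assumes d: "hdisj h1 h2" and hh: "h = hunion h1 h2" and a: "dom (hmap h1) = {a}"
  shows "h2 = hdel h a \<and> hmap h a = hmap h1 a"
proof -
  have n2: "hmap h2 a = None" using d a unfolding hdisj_def by auto
  have "hmap h2 = (hmap h)(a := None)"
  proof
    fix x show "hmap h2 x = ((hmap h)(a := None)) x"
      using n2 a unfolding hh hmap_hunion
      by (cases "hmap h2 x") (auto simp: map_add_def split: option.splits)
  qed
  then show ?thesis using n2 unfolding hh
    by (auto intro!: heap_eqI simp: hmap_hdel hmap_hunion map_add_def)
qed

lemma cell_exists:
  assumes a: "a \<in> dom (hmap h)"
  shows "\<exists>h1. hdisj h1 (hdel h a) \<and> h = hunion h1 (hdel h a) \<and> dom (hmap h1) = {a}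
     \<and> hmap h1 a = hmap h a"
proof -
  have a0: "a \<noteq> 0" using a hmap_prop[of h] by auto
  define m where "m = (\<lambda>x. if x = a then hmap h a else None)"
  have dm: "dom m = {a}" using a by (auto simp: m_def split: if_splits)
  have hm: "hmap (Abs_heap m) = m" by (rule hmap_Abs) (use dm a0 in auto)
  show ?thesis
  proof (intro exI conjI)
    show "hdisj (Abs_heap m) (hdel h a)" unfolding hdisj_def hm hmap_hdel dm by auto
    show "h = hunion (Abs_heap m) (hdel h a)"
      apply (rule heap_eqI, rule ext)
      apply (simp add: hmap_hunion hm hmap_hdel map_add_def)
      by (auto simp: m_def split: option.splits)
    show "dom (hmap (Abs_heap m)) = {a}" using hm dm by simp
    show "hmap (Abs_heap m) a = hmap h a" unfolding hm by (simp add: m_def)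
  qed
qed

lemma sep_conj_cell:
  assumes A: "\<And>h1. A (s, h1) = (if dom (hmap h1) = {a} \<and> R (hmap h1 a) then 0 else top)"
  shows "sep_conj A G (s, h) = (if a \<in> dom (hmap h) \<and> R (hmap h a) then G (s, hdel h a) else top)"
proof -
  let ?X = "{(h1, h2). hdisj h1 h2 \<and> h = hunion h1 h2}"
  have low: "(if a \<in> dom (hmap h) \<and> R (hmap h a) then G (s, hdel h a) else top) \<le> A (s, h1) + G (s, h2)"
    if "(h1, h2) \<in> ?X" for h1 h2
  proof (cases "dom (hmap h1) = {a} \<and> R (hmap h1 a)")
    case True
    with cell_split[of h1 h2 h a] that have "h2 = hdel h a \<and> hmap h a = hmap h1 a" by auto
    then have sp: "h2 = hdel h a" "hmap h a = hmap h1 a" by auto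
    from True have "a \<in> dom (hmap h1)" by (metis insertI1)
    then have ain: "a \<in> dom (hmap h)" using sp(2) by (simp add: dom_def)
    show ?thesis using True A sp ain by auto
  qed (auto simp: A)
  show ?thesis
  proof (cases "a \<in> dom (hmap h) \<and> R (hmap h a)")
    case True
    then obtain h1 where h1: "hdisj h1 (hdel h a)" "h = hunion h1 (hdel h a)" "dom (hmap h1) = {a}"
      "hmap h1 a = hmap h a" using cell_exists[of a h] by blast
    have "sep_conj A G (s, h) \<le> A (s, h1) + G (s, hdel h a)"
      unfolding sep_conj_def by (simp, rule INF_lower2[of "(h1, hdel h a)"]) (use h1 in auto)
    also have "\<dots> = G (s, hdel h a)" using h1 True A by simp
    finally have "sep_conj A G (s, h) \<le> G (s, hdel h a)" .
    moreover have "G (s, hdel h a) \<le> sep_conj A G (s, h)"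
      unfolding sep_conj_def apply simp apply (rule INF_greatest)
      subgoal for p using low[of "fst p" "snd p"] True by simp
      done
    ultimately show ?thesis using True by simp
  next
    case False
    have "top \<le> sep_conj A G (s, h)"
      unfolding sep_conj_def apply simp apply (rule INF_greatest)
      subgoal for p using low[of "fst p" "snd p"] False by simp
      done
    then show ?thesis using False top_unique by auto
  qed
qed

lemma wand01:
  assumes "\<And>h'. A (s, h') = 0 \<or> A (s, h') = top"
  shows "sep_wand A g (s, h) = (SUP h'\<in>{h'. hdisj h' h \<and> A (s, h') = 0}. g (s, hunion h h'))"
proof (unfold sep_wand_def, simp, rule antisym)
  show "(SUP h'\<in>{h'. hdisj h' h}. tsub (g (s, hunion h h')) (A (s, h')))
    \<le> (SUP h'\<in>{h'. hdisj h' h \<and> A (s, h') = 0}. g (s, hunion h h'))"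
  proof (rule SUP_least)
    fix h' assume "h' \<in> {h'. hdisj h' h}"
    then show "tsub (g (s, hunion h h')) (A (s, h')) \<le> (SUP h'\<in>{h'. hdisj h' h \<and> A (s, h') = 0}. g (s, hunion h h'))"
    proof (cases "A (s, h') = 0")
      case True
      then have "g (s, hunion h h') \<le> (SUP h'\<in>{h'. hdisj h' h \<and> A (s, h') = 0}. g (s, hunion h h'))"
        using \<open>h' \<in> {h'. hdisj h' h}\<close> by (intro SUP_upper) auto
      then show ?thesis using True by (cases "g (s, hunion h h') = top") (auto simp: tsub_def)
    qed (use assms[of h'] in \<open>simp add: tsub_def\<close>)
  qed
  show "(SUP h'\<in>{h'. hdisj h' h \<and> A (s, h') = 0}. g (s, hunion h h'))
    \<le> (SUP h'\<in>{h'. hdisj h' h}. tsub (g (s, hunion h h')) (A (s, h')))"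
  proof (rule SUP_least)
    fix h' assume h': "h' \<in> {h'. hdisj h' h \<and> A (s, h') = 0}"
    then have "tsub (g (s, hunion h h')) (A (s, h')) = g (s, hunion h h')"
      by (auto simp: tsub_def)
    then show "g (s, hunion h h') \<le> (SUP h'\<in>{h'. hdisj h' h}. tsub (g (s, hunion h h')) (A (s, h')))"
      using h' by (metis (mono_tags, lifting) SUP_upper mem_Collect_eq)
  qed
qed



definition subadd :: "('v rt \<Rightarrow> 'v rt) \<Rightarrow> bool" where
  "subadd T \<longleftrightarrow> (\<forall>f g. T (\<lambda>\<sigma>. f \<sigma> + g \<sigma>) \<le> (\<lambda>\<sigma>. T f \<sigma> + T g \<sigma>))"

definition cprop :: "('v rt \<Rightarrow> 'v rt) \<Rightarrow> bool" where
  "cprop T \<longleftrightarrow> (\<forall>c f. T (\<lambda>\<sigma>. c + f \<sigma>) \<le> (\<lambda>\<sigma>. c + T f \<sigma>))"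

definition good :: "('v rt \<Rightarrow> 'v rt) \<Rightarrow> bool" where
  "good T \<longleftrightarrow> sup_continuous T \<and> subadd T \<and> cprop T"

lemma SUP_add_le:
  fixes f g :: "'a \<Rightarrow> ennreal"
  shows "(SUP y\<in>S. f y + g y) \<le> (SUP y\<in>S. f y) + (SUP y\<in>S. g y)"
  by (rule SUP_least) (intro add_mono SUP_upper; simp)

lemma SUP_const_add_le:
  fixes f :: "'a \<Rightarrow> ennreal"
  shows "(SUP y\<in>S. c + f y) \<le> c + (SUP y\<in>S. f y)"
  by (rule SUP_least) (intro add_mono SUP_upper order_refl; simp)

lemma basic_good:
  fixes T :: "'v rt \<Rightarrow> 'v rt"
  assumes T: "\<And>f. T f = (\<lambda>\<sigma>. if P \<sigma> then top else c \<sigma> + (SUP y\<in>S \<sigma>. f y))"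
  shows "good T"
proof -
  have TT: "T = (\<lambda>f \<sigma>. if P \<sigma> then top else c \<sigma> + (SUP y\<in>S \<sigma>. f y))"
    by (rule ext) (rule T)
  have sc: "sup_continuous T" unfolding TT
    by (intro sup_continuous_fun sup_continuous_If sup_continuous_const sup_continuous_add_ennreal
        sup_continuous_apply_SUP sup_continuous_apply)
  have sa: "subadd T" unfolding subadd_def TT
  proof (intro allI le_funI)
    fix f g :: "'v rt" and \<sigma>
    have "c \<sigma> + (SUP y\<in>S \<sigma>. f y + g y) \<le> c \<sigma> + ((SUP y\<in>S \<sigma>. f y) + (SUP y\<in>S \<sigma>. g y))"
      by (intro add_mono order_refl SUP_add_le)
    also have "\<dots> \<le> (c \<sigma> + (SUP y\<in>S \<sigma>. f y)) + (c \<sigma> + (SUP y\<in>S \<sigma>. g y))"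
      by (simp add: add_ac add_increasing)
    finally show "(if P \<sigma> then top else c \<sigma> + (SUP y\<in>S \<sigma>. f y + g y))
      \<le> (if P \<sigma> then top else c \<sigma> + (SUP y\<in>S \<sigma>. f y)) + (if P \<sigma> then top else c \<sigma> + (SUP y\<in>S \<sigma>. g y))"
      by simp
  qed
  have cp: "cprop T" unfolding cprop_def TT
  proof (intro allI le_funI)
    fix f :: "'v rt" and \<sigma> and k :: ennreal
    have "c \<sigma> + (SUP y\<in>S \<sigma>. k + f y) \<le> c \<sigma> + (k + (SUP y\<in>S \<sigma>. f y))"
      by (intro add_mono order_refl SUP_const_add_le)
    then show "(if P \<sigma> then top else c \<sigma> + (SUP y\<in>S \<sigma>. k + f y))
      \<le> k + (if P \<sigma> then top else c \<sigma> + (SUP y\<in>S \<sigma>. f y))"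
      by (simp add: add_ac)
  qed
  show ?thesis using sc sa cp by (simp add: good_def)
qed

lemma comb_good:
  fixes T T1 T2 :: "'v rt \<Rightarrow> 'v rt"
  assumes T: "\<And>f. T f = (\<lambda>\<sigma>. a \<sigma> * T1 f \<sigma> + b \<sigma> * T2 f \<sigma>)"
    and ab: "\<And>\<sigma>. a \<sigma> + b \<sigma> \<le> 1"
    and g1: "good T1" and g2: "good T2"
  shows "good T"
proof -
  have TT: "T = (\<lambda>f \<sigma>. a \<sigma> * T1 f \<sigma> + b \<sigma> * T2 f \<sigma>)"
    by (rule ext) (rule T)
  have s1: "sup_continuous T1" and s2: "sup_continuous T2"
    using g1 g2 by (auto simp: good_def)
  have a1: "sup_continuous (\<lambda>f. T1 f \<sigma>)" for \<sigma> using sup_continuous_applyD[OF s1] .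
  have a2: "sup_continuous (\<lambda>f. T2 f \<sigma>)" for \<sigma> using sup_continuous_applyD[OF s2] .
  have sc: "sup_continuous T" unfolding TT
    apply (rule sup_continuous_fun)
    apply (rule sup_continuous_add_ennreal)
    apply (rule sup_continuous_mult_left_ennreal, rule a1)
    apply (rule sup_continuous_mult_left_ennreal, rule a2)
    done
  have sa: "subadd T" unfolding subadd_def TT
  proof (intro allI le_funI)
    fix f g :: "'v rt" and \<sigma>
    have "T1 (\<lambda>\<sigma>. f \<sigma> + g \<sigma>) \<sigma> \<le> T1 f \<sigma> + T1 g \<sigma>"
      using g1 unfolding good_def subadd_def by (auto dest: le_funD)
    moreover have "T2 (\<lambda>\<sigma>. f \<sigma> + g \<sigma>) \<sigma> \<le> T2 f \<sigma> + T2 g \<sigma>"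
      using g2 unfolding good_def subadd_def by (auto dest: le_funD)
    ultimately have "a \<sigma> * T1 (\<lambda>\<sigma>. f \<sigma> + g \<sigma>) \<sigma> + b \<sigma> * T2 (\<lambda>\<sigma>. f \<sigma> + g \<sigma>) \<sigma>
       \<le> a \<sigma> * (T1 f \<sigma> + T1 g \<sigma>) + b \<sigma> * (T2 f \<sigma> + T2 g \<sigma>)"
      by (intro add_mono mult_left_mono) auto
    also have "\<dots> = (a \<sigma> * T1 f \<sigma> + b \<sigma> * T2 f \<sigma>) + (a \<sigma> * T1 g \<sigma> + b \<sigma> * T2 g \<sigma>)"
      by (simp add: distrib_left add_ac)
    finally show "a \<sigma> * T1 (\<lambda>\<sigma>. f \<sigma> + g \<sigma>) \<sigma> + b \<sigma> * T2 (\<lambda>\<sigma>. f \<sigma> + g \<sigma>) \<sigma>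
       \<le> (a \<sigma> * T1 f \<sigma> + b \<sigma> * T2 f \<sigma>) + (a \<sigma> * T1 g \<sigma> + b \<sigma> * T2 g \<sigma>)" .
  qed
  have cp: "cprop T" unfolding cprop_def TT
  proof (intro allI le_funI)
    fix f :: "'v rt" and \<sigma> and k :: ennreal
    have "T1 (\<lambda>\<sigma>. k + f \<sigma>) \<sigma> \<le> k + T1 f \<sigma>"
      using g1 unfolding good_def cprop_def by (auto dest: le_funD)
    moreover have "T2 (\<lambda>\<sigma>. k + f \<sigma>) \<sigma> \<le> k + T2 f \<sigma>"
      using g2 unfolding good_def cprop_def by (auto dest: le_funD)
    ultimately have "a \<sigma> * T1 (\<lambda>\<sigma>. k + f \<sigma>) \<sigma> + b \<sigma> * T2 (\<lambda>\<sigma>. k + f \<sigma>) \<sigma>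
       \<le> a \<sigma> * (k + T1 f \<sigma>) + b \<sigma> * (k + T2 f \<sigma>)"
      by (intro add_mono mult_left_mono) auto
    also have "\<dots> = (a \<sigma> + b \<sigma>) * k + (a \<sigma> * T1 f \<sigma> + b \<sigma> * T2 f \<sigma>)"
      by (simp add: distrib_left distrib_right add_ac)
    also have "\<dots> \<le> 1 * k + (a \<sigma> * T1 f \<sigma> + b \<sigma> * T2 f \<sigma>)"
      by (intro add_mono mult_right_mono ab order_refl) simp
    finally show "a \<sigma> * T1 (\<lambda>\<sigma>. k + f \<sigma>) \<sigma> + b \<sigma> * T2 (\<lambda>\<sigma>. k + f \<sigma>) \<sigma>
       \<le> k + (a \<sigma> * T1 f \<sigma> + b \<sigma> * T2 f \<sigma>)" by simp
  qed
  show ?thesis using sc sa cp by (simp add: good_def)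
qed

lemma seq_good:
  assumes g1: "good T1" and g2: "good T2"
  shows "good (\<lambda>f. T1 (T2 f))"
proof -
  have s1: "sup_continuous T1" and s2: "sup_continuous T2"
    using g1 g2 by (auto simp: good_def)
  have m1: "mono T1" by (rule sup_continuous_mono[OF s1])
  have sc: "sup_continuous (\<lambda>f. T1 (T2 f))" by (rule sup_continuous_compose[OF s1 s2])
  have sa: "subadd (\<lambda>f. T1 (T2 f))" unfolding subadd_def
  proof (intro allI)
    fix f g :: "'a rt"
    have "T1 (T2 (\<lambda>\<sigma>. f \<sigma> + g \<sigma>)) \<le> T1 (\<lambda>\<sigma>. T2 f \<sigma> + T2 g \<sigma>)"
      using g2 m1 unfolding good_def subadd_def by (auto dest: monoD)
    also have "\<dots> \<le> (\<lambda>\<sigma>. T1 (T2 f) \<sigma> + T1 (T2 g) \<sigma>)"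
      using g1 unfolding good_def subadd_def by auto
    finally show "T1 (T2 (\<lambda>\<sigma>. f \<sigma> + g \<sigma>)) \<le> (\<lambda>\<sigma>. T1 (T2 f) \<sigma> + T1 (T2 g) \<sigma>)" .
  qed
  have cp: "cprop (\<lambda>f. T1 (T2 f))" unfolding cprop_def
  proof (intro allI)
    fix f :: "'a rt" and k
    have "T1 (T2 (\<lambda>\<sigma>. k + f \<sigma>)) \<le> T1 (\<lambda>\<sigma>. k + T2 f \<sigma>)"
      using g2 m1 unfolding good_def cprop_def by (auto dest: monoD)
    also have "\<dots> \<le> (\<lambda>\<sigma>. k + T1 (T2 f) \<sigma>)"
      using g1 unfolding good_def cprop_def by auto
    finally show "T1 (T2 (\<lambda>\<sigma>. k + f \<sigma>)) \<le> (\<lambda>\<sigma>. k + T1 (T2 f) \<sigma>)" .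
  qed
  show ?thesis using sc sa cp by (simp add: good_def)
qed



lemma INF01:
  fixes g :: "'a \<Rightarrow> ennreal"
  assumes "\<And>x. x \<in> X \<Longrightarrow> g x = 0 \<or> g x = top"
  shows "(INF x\<in>X. g x) = 0 \<or> (INF x\<in>X. g x) = top"
proof (cases "\<exists>x\<in>X. g x = 0")
  case True
  then obtain x where "x \<in> X" "g x = 0" by blast
  then have "(INF x\<in>X. g x) \<le> 0" by (metis INF_lower)
  then show ?thesis by simp
next
  case False
  have "top \<le> (INF x\<in>X. g x)"
  proof (rule INF_greatest)
    fix x assume x: "x \<in> X"
    then have "g x = top" using False assms by blast
    then show "top \<le> g x" by simp
  qed
  then have "(INF x\<in>X. g x) = top" using top_unique by blast
  then show ?thesis by blast
qed

lemma sep_conj01: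
  assumes "\<And>\<sigma>. A \<sigma> = 0 \<or> A \<sigma> = top" "\<And>\<sigma>. B \<sigma> = 0 \<or> B \<sigma> = top"
  shows "sep_conj A B \<sigma> = 0 \<or> sep_conj A B \<sigma> = top"
proof -
  obtain s h where sh: "\<sigma> = (s, h)" by fastforce
  have "(INF p\<in>{(h1, h2). hdisj h1 h2 \<and> h = hunion h1 h2}. A (s, fst p) + B (s, snd p)) = 0 \<or>
        (INF p\<in>{(h1, h2). hdisj h1 h2 \<and> h = hunion h1 h2}. A (s, fst p) + B (s, snd p)) = top"
  proof (rule INF01)
    fix p show "A (s, fst p) + B (s, snd p) = 0 \<or> A (s, fst p) + B (s, snd p) = top"
      using assms(1)[of "(s, fst p)"] assms(2)[of "(s, snd p)"] by auto
  qed
  then show ?thesis unfolding sep_conj_def sh by simp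
qed

lemma bigsep01:
  assumes "\<And>i \<sigma>. F i \<sigma> = 0 \<or> F i \<sigma> = top"
  shows "bigsep n F \<sigma> = 0 \<or> bigsep n F \<sigma> = top"
proof (induction n arbitrary: \<sigma>)
  case 0 then show ?case by (auto simp: emp_rt_def split: prod.splits)
next
  case (Suc n) then show ?case by (simp add: sep_conj01 assms)
qed

lemma pts01: "pts e e' \<sigma> = 0 \<or> pts e e' \<sigma> = top"
  by (auto simp: pts_def split: prod.splits)

lemma ert_Tick: "ert (Tick e) f = (\<lambda>\<sigma>. if False then top else of_nat (e (fst \<sigma>)) + (SUP y\<in>{\<sigma>}. f y))"
  by (auto simp: fun_eq_iff tick_char)

lemma ert_Assign: "ert (Assign x e) f =
   (\<lambda>\<sigma>. if False then top else 0 + (SUP y\<in>{((fst \<sigma>)(x := e (fst \<sigma>)), snd \<sigma>)}. f y))"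
  by (auto simp: fun_eq_iff subst_def)

lemma pts_any_cell: "sep_conj (pts_any e) G (s, h) =
   (if e s \<in> dom (hmap h) then G (s, hdel h (e s)) else top)"
  using sep_conj_cell[of "pts_any e" s "e s" "\<lambda>_. True" G h] by (simp add: pts_any_def)

lemma pts_cell: "sep_conj (pts e e') G (s, h) =
   (if e s \<in> dom (hmap h) \<and> hmap h (e s) = Some (e' s) then G (s, hdel h (e s)) else top)"
  using sep_conj_cell[of "pts e e'" s "e s" "\<lambda>z. z = Some (e' s)" G h] by (simp add: pts_def)

lemma ert_Free: "ert (Free e) f =
   (\<lambda>\<sigma>. if e (fst \<sigma>) \<notin> dom (hmap (snd \<sigma>)) then top else 0 + (SUP y\<in>{(fst \<sigma>, hdel (snd \<sigma>) (e (fst \<sigma>)))}. f y))"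
  by (auto simp: fun_eq_iff pts_any_cell)

lemma ert_Store: "ert (Store e e') f =
   (\<lambda>\<sigma>. if e (fst \<sigma>) \<notin> dom (hmap (snd \<sigma>)) then top else 0 + (SUP y\<in>
     (\<lambda>h'. (fst \<sigma>, hunion (hdel (snd \<sigma>) (e (fst \<sigma>))) h')) `
        {h'. hdisj h' (hdel (snd \<sigma>) (e (fst \<sigma>))) \<and> pts e e' (fst \<sigma>, h') = 0}. f y))"
proof (rule ext)
  fix \<sigma> :: "'a stack \<times> heap"
  obtain s h where sh: "\<sigma> = (s, h)" by fastforce
  show "ert (Store e e') f \<sigma> = (if e (fst \<sigma>) \<notin> dom (hmap (snd \<sigma>)) then top else 0 + (SUP y\<in>
     (\<lambda>h'. (fst \<sigma>, hunion (hdel (snd \<sigma>) (e (fst \<sigma>))) h')) `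
        {h'. hdisj h' (hdel (snd \<sigma>) (e (fst \<sigma>))) \<and> pts e e' (fst \<sigma>, h') = 0}. f y))"
    unfolding sh by (simp add: pts_any_cell wand01[OF pts01] image_image)
qed

lemma ert_Load: "ert (Load x e) f =
   (\<lambda>\<sigma>. if hmap (snd \<sigma>) (e (fst \<sigma>)) = None then top else 0 + (SUP y\<in>
     (\<lambda>h'. ((fst \<sigma>)(x := the (hmap (snd \<sigma>) (e (fst \<sigma>)))), hunion (hdel (snd \<sigma>) (e (fst \<sigma>))) h')) `
        {h'. hdisj h' (hdel (snd \<sigma>) (e (fst \<sigma>))) \<and>
             pts e (\<lambda>_. the (hmap (snd \<sigma>) (e (fst \<sigma>)))) (fst \<sigma>, h') = 0}. f y))"
proof (rule ext)
  fix \<sigma> :: "'a stack \<times> heap"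
  obtain s h where sh: "\<sigma> = (s, h)" by fastforce
  define W where "W v = sep_wand (pts e (\<lambda>_. v)) (subst f x (\<lambda>_. v)) (s, hdel h (e s))" for v
  have E: "ert (Load x e) f (s, h) = (INF v. if hmap h (e s) = Some v then W v else top)"
    unfolding ert.simps by (rule INF_cong[OF refl]) (simp add: pts_cell W_def domIff)
  have E2: "(INF v. if hmap h (e s) = Some v then W v else top) =
        (case hmap h (e s) of None \<Rightarrow> top | Some w \<Rightarrow> W w)"
  proof (cases "hmap h (e s)")
    case None then show ?thesis by simp
  next
    case (Some w)
    have "(INF v. if hmap h (e s) = Some v then W v else top) \<le> W w"
      by (rule INF_lower2[of w]) (simp_all add: Some)
    moreover have "W w \<le> (INF v. if hmap h (e s) = Some v then W v else top)"
      by (rule INF_greatest) (simp add: Some)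
    ultimately show ?thesis using Some by simp
  qed
  have W: "W w = (SUP h'\<in>{h'. hdisj h' (hdel h (e s)) \<and> pts e (\<lambda>_. w) (s, h') = 0}.
      f (s(x := w), hunion (hdel h (e s)) h'))" for w
    unfolding W_def by (simp add: wand01[OF pts01] subst_def)
  show "ert (Load x e) f \<sigma> = (if hmap (snd \<sigma>) (e (fst \<sigma>)) = None then top else 0 + (SUP y\<in>
     (\<lambda>h'. ((fst \<sigma>)(x := the (hmap (snd \<sigma>) (e (fst \<sigma>)))), hunion (hdel (snd \<sigma>) (e (fst \<sigma>))) h')) `
        {h'. hdisj h' (hdel (snd \<sigma>) (e (fst \<sigma>))) \<and>
             pts e (\<lambda>_. the (hmap (snd \<sigma>) (e (fst \<sigma>)))) (fst \<sigma>, h') = 0}. f y))"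
    unfolding sh E E2 by (simp add: W image_image split: option.splits)
qed

lemma ert_Alloc_pt: "ert (Alloc x e) f (s, h) = (SUP y\<in>(\<Union>v. (\<lambda>h'. (s(x := v), hunion h h')) `
        {h'. hdisj h' h \<and> bigsep_e e (\<lambda>i. pts (\<lambda>_. v + i - 1) (\<lambda>_. 0)) (s, h') = 0}). f y)"
proof -
  have B: "bigsep_e e (\<lambda>i. pts (\<lambda>_. v + i - 1) (\<lambda>_. 0)) (s, h') = 0 \<or>
           bigsep_e e (\<lambda>i. pts (\<lambda>_. v + i - 1) (\<lambda>_. 0)) (s, h') = top" for v h'
    unfolding bigsep_e_def by (simp add: bigsep01 pts01)
  have W: "sep_wand (bigsep_e e (\<lambda>i. pts (\<lambda>_. v + i - 1) (\<lambda>_. 0))) g (s, h) =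
      (SUP h'\<in>{h'. hdisj h' h \<and> bigsep_e e (\<lambda>i. pts (\<lambda>_. v + i - 1) (\<lambda>_. 0)) (s, h') = 0}. g (s, hunion h h'))"
      for v g by (rule wand01) (rule B)
  have "ert (Alloc x e) f (s, h) = (SUP v. sep_wand (bigsep_e e (\<lambda>i. pts (\<lambda>_. v + i - 1) (\<lambda>_. 0))) (subst f x (\<lambda>_. v)) (s, h))"
    by (simp only: ert.simps)
  also have "\<dots> = (SUP v. SUP h'\<in>{h'. hdisj h' h \<and> bigsep_e e (\<lambda>i. pts (\<lambda>_. v + i - 1) (\<lambda>_. 0)) (s, h') = 0}.
      f (s(x := v), hunion h h'))"
    by (simp only: W subst_def case_prod_conv)
  also have "\<dots> = (SUP y\<in>(\<Union>v. (\<lambda>h'. (s(x := v), hunion h h')) `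
      {h'. hdisj h' h \<and> bigsep_e e (\<lambda>i. pts (\<lambda>_. v + i - 1) (\<lambda>_. 0)) (s, h') = 0}). f y)"
    by (simp only: SUP_UNION image_image)
  finally show ?thesis .
qed

lemma ert_Alloc: "ert (Alloc x e) f =
   (\<lambda>\<sigma>. if False then top else 0 + (SUP y\<in>
     (\<Union>v. (\<lambda>h'. ((fst \<sigma>)(x := v), hunion (snd \<sigma>) h')) `
        {h'. hdisj h' (snd \<sigma>) \<and> bigsep_e e (\<lambda>i. pts (\<lambda>_. v + i - 1) (\<lambda>_. 0)) (fst \<sigma>, h') = 0}). f y))"
proof (rule ext)
  fix \<sigma> :: "'a stack \<times> heap"
  obtain s h where sh: "\<sigma> = (s, h)" by fastforce
  show "ert (Alloc x e) f \<sigma> = (if False then top else 0 + (SUP y\<in>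
     (\<Union>v. (\<lambda>h'. ((fst \<sigma>)(x := v), hunion (snd \<sigma>) h')) `
        {h'. hdisj h' (snd \<sigma>) \<and> bigsep_e e (\<lambda>i. pts (\<lambda>_. v + i - 1) (\<lambda>_. 0)) (fst \<sigma>, h') = 0}). f y))"
    unfolding sh fst_conv snd_conv if_False add_0_left by (rule ert_Alloc_pt)
qed



lemma iverson_sum: "iverson (\<lambda>s. \<not> \<phi> s) \<sigma> + iverson \<phi> \<sigma> = 1"
  by (auto simp: iverson_def split: prod.splits)

lemma while_good:
  fixes T :: "'v rt \<Rightarrow> 'v rt"
  assumes g: "good T"
  shows "good (\<lambda>f. lfp (\<lambda>G \<sigma>. iverson (\<lambda>s. \<not> \<phi> s) \<sigma> * f \<sigma> + iverson \<phi> \<sigma> * T G \<sigma>))"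
proof -
  define \<Phi> where "\<Phi> f G \<sigma> = iverson (\<lambda>s. \<not> \<phi> s) \<sigma> * f \<sigma> + iverson \<phi> \<sigma> * T G \<sigma>" for f G :: "'v rt" and \<sigma>
  have s: "sup_continuous T" using g by (simp add: good_def)
  have aT: "sup_continuous (\<lambda>G. T G \<sigma>)" for \<sigma> using sup_continuous_applyD[OF s] .
  have sc1: "sup_continuous (\<Phi> f)" for f
    unfolding \<Phi>_def
    apply (rule sup_continuous_fun)
    apply (rule sup_continuous_add_ennreal)
     apply (rule sup_continuous_const)
    apply (rule sup_continuous_mult_left_ennreal, rule aT)
    done
  have mono1: "mono (\<Phi> f)" for f by (rule sup_continuous_mono[OF sc1])
  have sc: "sup_continuous (\<lambda>f. lfp (\<Phi> f))"
  proof (rule sup_continuous_lfp'')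
    show "sup_continuous (\<Phi> f)" for f by (rule sc1)
    fix G :: "'v rt \<Rightarrow> 'v rt" assume sG: "sup_continuous G"
    have c: "sup_continuous (\<lambda>f. T (G f))" by (rule sup_continuous_compose[OF s sG])
    have ac: "sup_continuous (\<lambda>f. T (G f) \<sigma>)" for \<sigma> using sup_continuous_applyD[OF c] .
    have ap: "sup_continuous (\<lambda>f::'v rt. f \<sigma>)" for \<sigma> by (rule sup_continuous_apply)
    show "sup_continuous (\<lambda>f. \<Phi> f (G f))"
      unfolding \<Phi>_def
      apply (rule sup_continuous_fun)
      apply (rule sup_continuous_add_ennreal)
       apply (rule sup_continuous_mult_left_ennreal, rule ap)
      apply (rule sup_continuous_mult_left_ennreal, rule ac)
      done
  qed
  have sa: "subadd (\<lambda>f. lfp (\<Phi> f))" unfolding subadd_def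
  proof (intro allI)
    fix f g :: "'v rt"
    let ?Lf = "lfp (\<Phi> f)" and ?Lg = "lfp (\<Phi> g)"
    have ff: "\<Phi> f ?Lf = ?Lf" by (rule lfp_fixpoint[OF mono1])
    have fg: "\<Phi> g ?Lg = ?Lg" by (rule lfp_fixpoint[OF mono1])
    show "lfp (\<Phi> (\<lambda>\<sigma>. f \<sigma> + g \<sigma>)) \<le> (\<lambda>\<sigma>. ?Lf \<sigma> + ?Lg \<sigma>)"
    proof (rule lfp_lowerbound, rule le_funI)
      fix \<sigma>
      have "T (\<lambda>\<sigma>. ?Lf \<sigma> + ?Lg \<sigma>) \<sigma> \<le> T ?Lf \<sigma> + T ?Lg \<sigma>"
        using g unfolding good_def subadd_def by (auto dest: le_funD)
      then have "\<Phi> (\<lambda>\<sigma>. f \<sigma> + g \<sigma>) (\<lambda>\<sigma>. ?Lf \<sigma> + ?Lg \<sigma>) \<sigma> \<le>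
          iverson (\<lambda>s. \<not> \<phi> s) \<sigma> * (f \<sigma> + g \<sigma>) + iverson \<phi> \<sigma> * (T ?Lf \<sigma> + T ?Lg \<sigma>)"
        unfolding \<Phi>_def by (intro add_mono mult_left_mono order_refl) auto
      also have "\<dots> = \<Phi> f ?Lf \<sigma> + \<Phi> g ?Lg \<sigma>"
        unfolding \<Phi>_def by (simp add: distrib_left add_ac)
      also have "\<dots> = ?Lf \<sigma> + ?Lg \<sigma>" using ff fg by simp
      finally show "\<Phi> (\<lambda>\<sigma>. f \<sigma> + g \<sigma>) (\<lambda>\<sigma>. ?Lf \<sigma> + ?Lg \<sigma>) \<sigma> \<le> ?Lf \<sigma> + ?Lg \<sigma>" .
    qed
  qed
  have cp: "cprop (\<lambda>f. lfp (\<Phi> f))" unfolding cprop_def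
  proof (intro allI)
    fix f :: "'v rt" and k :: ennreal
    let ?L = "lfp (\<Phi> f)"
    have ff: "\<Phi> f ?L = ?L" by (rule lfp_fixpoint[OF mono1])
    show "lfp (\<Phi> (\<lambda>\<sigma>. k + f \<sigma>)) \<le> (\<lambda>\<sigma>. k + ?L \<sigma>)"
    proof (rule lfp_lowerbound, rule le_funI)
      fix \<sigma>
      have "T (\<lambda>\<sigma>. k + ?L \<sigma>) \<sigma> \<le> k + T ?L \<sigma>"
        using g unfolding good_def cprop_def by (auto dest: le_funD)
      then have "\<Phi> (\<lambda>\<sigma>. k + f \<sigma>) (\<lambda>\<sigma>. k + ?L \<sigma>) \<sigma> \<le>
          iverson (\<lambda>s. \<not> \<phi> s) \<sigma> * (k + f \<sigma>) + iverson \<phi> \<sigma> * (k + T ?L \<sigma>)"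
        unfolding \<Phi>_def by (intro add_mono mult_left_mono order_refl) auto
      also have "\<dots> = (iverson (\<lambda>s. \<not> \<phi> s) \<sigma> + iverson \<phi> \<sigma>) * k + \<Phi> f ?L \<sigma>"
        unfolding \<Phi>_def by (simp add: distrib_left distrib_right add_ac)
      also have "\<dots> = k + ?L \<sigma>" using ff by (simp add: iverson_sum)
      finally show "\<Phi> (\<lambda>\<sigma>. k + f \<sigma>) (\<lambda>\<sigma>. k + ?L \<sigma>) \<sigma> \<le> k + ?L \<sigma>" .
    qed
  qed
  have eq: "(\<lambda>f. lfp (\<lambda>G \<sigma>. iverson (\<lambda>s. \<not> \<phi> s) \<sigma> * f \<sigma> + iverson \<phi> \<sigma> * T G \<sigma>)) = (\<lambda>f. lfp (\<Phi> f))"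
    by (simp add: \<Phi>_def[abs_def])
  show ?thesis unfolding eq good_def using sc sa cp by simp
qed

lemma if_good: assumes "good (ert C1)" "good (ert C2)" shows "good (ert (prog.If \<phi> C1 C2))"
proof -
  have T: "\<And>f. ert (prog.If \<phi> C1 C2) f = (\<lambda>\<sigma>. iverson \<phi> \<sigma> * ert C1 f \<sigma> + iverson (\<lambda>s. \<not> \<phi> s) \<sigma> * ert C2 f \<sigma>)"
    by (simp only: ert.simps)
  have ab: "\<And>\<sigma>. iverson \<phi> \<sigma> + iverson (\<lambda>s. \<not> \<phi> s) \<sigma> \<le> 1"
  proof -
    fix \<sigma> show "iverson \<phi> \<sigma> + iverson (\<lambda>s. \<not> \<phi> s) \<sigma> \<le> 1"
      using iverson_sum[of \<phi> \<sigma>] by (simp only: add.commute order_refl)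
  qed
  show ?thesis by (rule comb_good[OF T ab assms])
qed

lemma ert_good: "wf_prog C \<Longrightarrow> good (ert C)"
proof (induction C)
  case (Tick e) show ?case by (rule basic_good[OF ert_Tick])
next
  case (Assign x e) show ?case by (rule basic_good[OF ert_Assign])
next
  case (Alloc x e) show ?case by (rule basic_good[OF ert_Alloc])
next
  case (Store e e') show ?case by (rule basic_good[OF ert_Store])
next
  case (Load x e) show ?case by (rule basic_good[OF ert_Load])
next
  case (Free e) show ?case by (rule basic_good[OF ert_Free])
next
  case (PChoice C1 p C2)
  then have p: "\<And>s. 0 \<le> p s \<and> p s \<le> 1" and g1: "good (ert C1)" and g2: "good (ert C2)" by auto
  show ?case
  proof (rule comb_good[OF _ _ g1 g2])
    show "ert (PChoice C1 p C2) f = (\<lambda>\<sigma>. ennreal (p (fst \<sigma>)) * ert C1 f \<sigma> + ennreal (1 - p (fst \<sigma>)) * ert C2 f \<sigma>)" for f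
      by (simp only: ert.simps)
    fix \<sigma> :: "'a stack \<times> heap"
    have "ennreal (p (fst \<sigma>)) + ennreal (1 - p (fst \<sigma>)) = ennreal (p (fst \<sigma>) + (1 - p (fst \<sigma>)))"
      using p[of "fst \<sigma>"] by (intro ennreal_plus[symmetric]) auto
    then show "ennreal (p (fst \<sigma>)) + ennreal (1 - p (fst \<sigma>)) \<le> 1" by simp
  qed
next
  case (If \<phi> C1 C2)
  from If.prems have w1: "wf_prog C1" and w2: "wf_prog C2" by simp_all
  show ?case by (rule if_good[OF If.IH(1)[OF w1] If.IH(2)[OF w2]])
next
  case (Seq C1 C2)
  from Seq.prems have w1: "wf_prog C1" and w2: "wf_prog C2" by simp_all
  have "good (\<lambda>f. ert C1 (ert C2 f))" by (rule seq_good[OF Seq.IH(1)[OF w1] Seq.IH(2)[OF w2]])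
  then show ?case by (simp only: ert.simps)
next
  case (While \<phi> C)
  from While.prems have w: "wf_prog C" by simp
  have "good (\<lambda>f. lfp (\<lambda>G \<sigma>. iverson (\<lambda>s. \<not> \<phi> s) \<sigma> * f \<sigma> + iverson \<phi> \<sigma> * ert C G \<sigma>))"
    by (rule while_good[OF While.IH[OF w]])
  then show ?case by (simp only: ert.simps)
qed


theorem mainTheorem8:
  fixes C :: "('v::finite) prog" and F :: "nat \<Rightarrow> 'v rt" and f g u :: "'v rt"
  assumes wf: "wf_prog C"
    and chain: "incseq F"
    and const: "\<exists>c. u = (\<lambda>_. c)"
  shows "ert C (SUP i. F i) = (SUP i. ert C (F i))
    \<and> (f \<le> g \<longrightarrow> ert C f \<le> ert C g)
    \<and> ert C (\<lambda>\<sigma>. f \<sigma> + g \<sigma>) \<le> (\<lambda>\<sigma>. ert C f \<sigma> + ert C g \<sigma>)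
    \<and> ert C (\<lambda>\<sigma>. u \<sigma> + f \<sigma>) \<le> (\<lambda>\<sigma>. u \<sigma> + ert C f \<sigma>)"
proof -
  have gd: "good (ert C)" by (rule ert_good[OF wf])
  have sc: "sup_continuous (ert C)" and sa: "subadd (ert C)" and cp: "cprop (ert C)"
    using gd by (simp_all only: good_def)
  have m: "mono F" using chain by (simp add: incseq_def mono_def)
  have p1: "ert C (SUP i. F i) = (SUP i. ert C (F i))" by (rule sup_continuousD[OF sc m])
  have p2: "f \<le> g \<longrightarrow> ert C f \<le> ert C g" using sup_continuous_mono[OF sc] by (auto dest: monoD)
  have p3: "ert C (\<lambda>\<sigma>. f \<sigma> + g \<sigma>) \<le> (\<lambda>\<sigma>. ert C f \<sigma> + ert C g \<sigma>)"
    using sa unfolding subadd_def by blast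
  obtain c where u: "u = (\<lambda>_. c)" using const by blast
  have p4: "ert C (\<lambda>\<sigma>. u \<sigma> + f \<sigma>) \<le> (\<lambda>\<sigma>. u \<sigma> + ert C f \<sigma>)"
    using cp unfolding cprop_def u by blast
  show ?thesis using p1 p2 p3 p4 by blast
qed

end
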